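(* Let $p\ge1$ be an integer and run the $p$-Pass algorithm with arbitrary orderings of $V$ in each pass. Then its output $S_p$ satisfies $|S_p|\le k$ and $f(S_p)\ge\big(1-(\tfrac{p}{p+1})^p\big)\mathrm{OPT}$.
   Context: $V$ is a finite ground set with $|V|=n$; $f:2^V\to\mathbb{R}_{\ge0}$ is monotone, submodular and normalized; $f(e\mid Y)=f(Y\cup\{e\})-f(Y)$. $k\le n$ is a positive integer and $\mathrm{OPT}=\max\{f(S):S\subseteq V,|S|\le k\}$. $p$-Pass algorithm (knows $\mathrm{OPT}$): start with $S=\emptyset$; for $i=1,\dots,p$, make a pass over all elements of $V$ (in some order) and add each element $e$ to $S$ if $|S|<k$ and $f(e\mid S)\ge(\frac{p}{p+1})^i\cdot\frac{\mathrm{OPT}}{k}$; return $S$. $S_i$ denotes the set $S$ after the $i$-th pass. *)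

theory Defs
  imports Main "HOL.Real"
begin

definition normalized_on :: "'a set \<Rightarrow> ('a set \<Rightarrow> real) \<Rightarrow> bool" where
  "normalized_on V f \<longleftrightarrow> f {} = 0"

definition nonneg_on :: "'a set \<Rightarrow> ('a set \<Rightarrow> real) \<Rightarrow> bool" where
  "nonneg_on V f \<longleftrightarrow> (\<forall>A. A \<subseteq> V \<longrightarrow> f A \<ge> 0)"

definition monotone_on_sets :: "'a set \<Rightarrow> ('a set \<Rightarrow> real) \<Rightarrow> bool" where
  "monotone_on_sets V f \<longleftrightarrow> (\<forall>A B. A \<subseteq> B \<and> B \<subseteq> V \<longrightarrow> f A \<le> f B)"

definition submodular_on :: "'a set \<Rightarrow> ('a set \<Rightarrow> real) \<Rightarrow> bool" where
  "submodular_on V f \<longleftrightarrow>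
     (\<forall>A B. A \<subseteq> V \<and> B \<subseteq> V \<longrightarrow> f (A \<union> B) + f (A \<inter> B) \<le> f A + f B)"

definition marg :: "('a set \<Rightarrow> real) \<Rightarrow> 'a \<Rightarrow> 'a set \<Rightarrow> real" where
  "marg f e Y = f (Y \<union> {e}) - f Y"

definition OPT :: "'a set \<Rightarrow> ('a set \<Rightarrow> real) \<Rightarrow> nat \<Rightarrow> real" where
  "OPT V f k = Max (f ` {S. S \<subseteq> V \<and> card S \<le> k})"

fun one_pass :: "('a set \<Rightarrow> real) \<Rightarrow> nat \<Rightarrow> real \<Rightarrow> 'a set \<Rightarrow> 'a list \<Rightarrow> 'a set" where
  "one_pass f k tau S [] = S"
| "one_pass f k tau S (e # es) =
     one_pass f k tau (if card S < k \<and> marg f e S \<ge> tau then insert e S else S) es"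

text \<open>State S_i after the i-th pass of the p-Pass algorithm; sigma i is the ordering
  of V used in pass i; opt is the (known) value OPT.\<close>
fun p_pass_state :: "('a set \<Rightarrow> real) \<Rightarrow> nat \<Rightarrow> nat \<Rightarrow> real \<Rightarrow> (nat \<Rightarrow> 'a list) \<Rightarrow> nat \<Rightarrow> 'a set" where
  "p_pass_state f k p opt sigma 0 = {}"
| "p_pass_state f k p opt sigma (Suc i) =
     one_pass f k ((real p / (real p + 1)) ^ Suc i * opt / real k)
       (p_pass_state f k p opt sigma i) (sigma (Suc i))"

end

theory Submission
  imports Defs
begin

lemma dim_ret:
  assumes mono: "monotone_on_sets V f" and sub: "submodular_on V f"
    and "S \<subseteq> T" "T \<subseteq> V" "e \<in> V"
  shows "marg f e T \<le> marg f e S"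
proof (cases "e \<in> T")
  case True
  hence "T \<union> {e} = T" by auto
  moreover have "S \<union> {e} \<subseteq> V" using assms by auto
  hence "f S \<le> f (S \<union> {e})" using mono assms(3) unfolding monotone_on_sets_def by blast
  ultimately show ?thesis unfolding marg_def by simp
next
  case False
  have "(S \<union> {e}) \<inter> T = S" using False assms by auto
  moreover have "(S \<union> {e}) \<union> T = T \<union> {e}" using assms by auto
  moreover have "f ((S \<union> {e}) \<union> T) + f ((S \<union> {e}) \<inter> T) \<le> f (S \<union> {e}) + f T"
    using sub[unfolded submodular_on_def, rule_format, of "S \<union> {e}" T] assms by blast
  ultimately show ?thesis unfolding marg_def by simp
qed

lemma sum_marg:
  assumes mono: "monotone_on_sets V f" and sub: "submodular_on V f"
    and "finite A" "A \<subseteq> V" "S \<subseteq> V"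
  shows "f (S \<union> A) \<le> f S + (\<Sum>e\<in>A. marg f e S)"
  using assms(3,4)
proof (induction A rule: finite_induct)
  case empty then show ?case by simp
next
  case (insert a A)
  have "marg f a (S \<union> A) \<le> marg f a S"
    using dim_ret[OF mono sub, of S "S \<union> A" a] insert assms by auto
  moreover have "f (S \<union> insert a A) = f (S \<union> A) + marg f a (S \<union> A)"
    unfolding marg_def by (simp add: Un_insert_right insert_absorb2)
  ultimately show ?case using insert by simp
qed

lemma op_basic:
  "finite S \<Longrightarrow> card S \<le> k \<Longrightarrow>
   finite (one_pass f k tau S es) \<and> card (one_pass f k tau S es) \<le> k \<and>
   S \<subseteq> one_pass f k tau S es \<and> one_pass f k tau S es \<subseteq> S \<union> set es"
proof (induction es arbitrary: S)
  case Nil then show ?case by simp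
next
  case (Cons e es)
  let ?S' = "if card S < k \<and> marg f e S \<ge> tau then insert e S else S"
  have "finite ?S'" "card ?S' \<le> k" using Cons.prems by (auto simp: card_insert_if)
  from Cons.IH[OF this] show ?case by auto
qed

lemma op_inv:
  "finite S \<Longrightarrow> f S \<ge> c + tau * real (card S) \<Longrightarrow>
   f (one_pass f k tau S es) \<ge> c + tau * real (card (one_pass f k tau S es))"
proof (induction es arbitrary: S)
  case Nil then show ?case by simp
next
  case (Cons e es)
  let ?S' = "if card S < k \<and> marg f e S \<ge> tau then insert e S else S"
  have "finite ?S'" using Cons.prems by auto
  moreover have "f ?S' \<ge> c + tau * real (card ?S')"
  proof (cases "card S < k \<and> marg f e S \<ge> tau")
    case True
    show ?thesis
    proof (cases "e \<in> S")
      case True2: True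
      then show ?thesis using True Cons.prems by (simp add: insert_absorb)
    next
      case False
      have "f (insert e S) = f S + marg f e S" unfolding marg_def by simp
      moreover have "card (insert e S) = card S + 1" using False Cons.prems by simp
      ultimately show ?thesis using True Cons.prems by (simp add: algebra_simps)
    qed
  next
    case False
    hence "?S' = S" by (rule if_not_P)
    then show ?thesis using Cons.prems by simp
  qed
  ultimately show ?case using Cons.IH by simp
qed

lemma op_unfull:
  "finite S \<Longrightarrow> card S \<le> k \<Longrightarrow> e \<in> set es \<Longrightarrow> e \<notin> one_pass f k tau S es \<Longrightarrow>
   card (one_pass f k tau S es) < k \<Longrightarrow>
   \<exists>S'. S' \<subseteq> one_pass f k tau S es \<and> marg f e S' < tau"
proof (induction es arbitrary: S)
  case Nil then show ?case by simp
next
  case (Cons e' es)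
  define S' where "S' = (if card S < k \<and> marg f e' S \<ge> tau then insert e' S else S)"
  have fin: "finite S'" "card S' \<le> k" using Cons.prems unfolding S'_def by (auto simp: card_insert_if)
  have res: "one_pass f k tau S (e' # es) = one_pass f k tau S' es" unfolding S'_def by simp
  have B: "finite (one_pass f k tau S' es)" "S' \<subseteq> one_pass f k tau S' es"
    using op_basic[of S' k f tau es] fin by auto
  show ?case
  proof (cases "e' = e")
    case True
    show ?thesis
    proof (cases "card S < k \<and> marg f e' S \<ge> tau")
      case True2: True
      then have "e \<in> S'" using True unfolding S'_def by simp
      then have "e \<in> one_pass f k tau S (e' # es)" using res B by auto
      then show ?thesis using Cons.prems(4) by blast
    next
      case False
      have SS': "S' = S" unfolding S'_def by (rule if_not_P[OF False])
      have sub: "S \<subseteq> one_pass f k tau S (e' # es)" using res B SS' by simp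
      have "card S \<le> card (one_pass f k tau S (e' # es))"
        using card_mono[OF B(1)] sub res by simp
      then have "card S < k" using Cons.prems(5) by linarith
      then have "marg f e S < tau" using False True by simp
      then show ?thesis using sub by blast
    qed
  next
    case False
    then have "e \<in> set es" using Cons.prems by simp
    moreover have "e \<notin> one_pass f k tau S' es" using Cons.prems(4) unfolding res .
    moreover have "card (one_pass f k tau S' es) < k" using Cons.prems(5) unfolding res .
    ultimately obtain T where "T \<subseteq> one_pass f k tau S' es" "marg f e T < tau"
      using Cons.IH[OF fin] by blast
    then show ?thesis unfolding res by blast
  qed
qed

lemma key_alg:
  fixes q Q x sk j pr :: real
  assumes "q + q / pr = 1"
  shows "Q*(1 - x*q) - x*q*Q*(j+1)/pr + x*q*Q/kk*s = Q*(1-x) + Q*(x*q)*(s/kk - j/pr)"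
proof -
  have "q / pr = 1 - q" using assms by simp
  have "x*q*Q*(j+1)/pr = x*Q*j*(q/pr) + x*Q*(q/pr)" by (simp add: algebra_simps add_divide_distrib)
  also have "... = x*Q*j*(q/pr) + x*Q*(1-q)" using \<open>q / pr = 1 - q\<close> by simp
  finally show ?thesis by (simp add: algebra_simps)
qed

theorem mainTheorem19:
  fixes V :: "'a set" and f :: "'a set \<Rightarrow> real" and k p :: nat
    and sigma :: "nat \<Rightarrow> 'a list"
  assumes "finite V"
    and "nonneg_on V f" and "monotone_on_sets V f" and "submodular_on V f"
    and "normalized_on V f"
    and "0 < k" and "k \<le> card V"
    and "1 \<le> p"
    and "\<forall>i \<in> {1..p}. distinct (sigma i) \<and> set (sigma i) = V"
  shows "card (p_pass_state f k p (OPT V f k) sigma p) \<le> k \<and>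
         f (p_pass_state f k p (OPT V f k) sigma p)
           \<ge> (1 - (real p / (real p + 1)) ^ p) * OPT V f k"
proof -
  define Q where "Q = OPT V f k"
  define q where "q = real p / (real p + 1)"
  define S where "S = (\<lambda>i. p_pass_state f k p Q sigma i)"
  have Sz: "S 0 = {}" unfolding S_def by simp
  have SS: "S (Suc j) = one_pass f k (q^Suc j * Q / real k) (S j) (sigma (Suc j))" for j
    unfolding S_def q_def by simp
  have q0: "0 \<le> q" "q \<le> 1" unfolding q_def by auto
  have qid: "q + q / real p = 1" proof -
    have "real p > 0" using assms(8) by simp
    have "q / real p = 1 / (real p + 1)" unfolding q_def using \<open>real p > 0\<close> by simp
    moreover have "real p / (real p + 1) + 1 / (real p + 1) = 1"
      using \<open>real p > 0\<close> by (simp add: add_divide_distrib[symmetric])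
    ultimately show ?thesis unfolding q_def by simp
  qed
  have kpos: "real k > 0" using assms(6) by simp
  have fin: "finite {S. S \<subseteq> V \<and> card S \<le> k}"
    by (rule finite_subset[of _ "Pow V"]) (use assms(1) in auto)
  have ne: "{} \<in> {S. S \<subseteq> V \<and> card S \<le> k}" by simp
  have Q0: "Q \<ge> 0"
  proof -
    have "f {} \<le> Q" unfolding Q_def OPT_def using fin ne by (intro Max_ge) auto
    thus ?thesis using assms(5) unfolding normalized_on_def by simp
  qed
  obtain Op where Op: "Op \<subseteq> V" "card Op \<le> k" "f Op = Q"
  proof -
    have "Q \<in> f ` {S. S \<subseteq> V \<and> card S \<le> k}" unfolding Q_def OPT_def
      using fin ne by (intro Max_in) auto
    thus ?thesis using that by auto
  qed
  have basic: "j \<le> p \<Longrightarrow> finite (S j) \<and> card (S j) \<le> k \<and> S j \<subseteq> V" for j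
  proof (induction j)
    case 0 then show ?case using Sz by simp
  next
    case (Suc j)
    then have IH: "finite (S j)" "card (S j) \<le> k" "S j \<subseteq> V" by auto
    have "set (sigma (Suc j)) = V" using assms(9) Suc.prems by auto
    then show ?case using op_basic[OF IH(1,2), of f "q^Suc j * Q / real k" "sigma (Suc j)"] IH SS
      by auto
  qed
  have unfull: "f (S j) \<ge> Q*(1 - q^j)" if j: "1 \<le> j" "j \<le> p" and sk: "card (S j) < k" for j
  proof -
    obtain i where i: "j = Suc i" using j by (cases j) auto
    define tau where "tau = q^j * Q / real k"
    have tau0: "tau \<ge> 0" unfolding tau_def using Q0 q0 kpos by simp
    have Bi: "finite (S i)" "card (S i) \<le> k" "S i \<subseteq> V" using basic[of i] j i by auto
    have Bj: "finite (S j)" "card (S j) \<le> k" "S j \<subseteq> V" using basic[of j] j by auto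
    have sig: "set (sigma j) = V" using assms(9) j by auto
    have Sj: "S j = one_pass f k tau (S i) (sigma j)" using SS[of i] i tau_def by simp
    have mb: "marg f e (S j) \<le> tau" if e: "e \<in> V" for e
    proof (cases "e \<in> S j")
      case True
      then have "S j \<union> {e} = S j" by auto
      then show ?thesis unfolding marg_def using tau0 by simp
    next
      case False
      obtain S' where S': "S' \<subseteq> S j" "marg f e S' < tau"
        using op_unfull[OF Bi(1,2), of e "sigma j" f tau] sig e False sk Sj by auto
      have "marg f e (S j) \<le> marg f e S'"
        using dim_ret[OF assms(3,4) S'(1) Bj(3) e] .
      then show ?thesis using S' by simp
    qed
    have "Q = f Op" using Op by simp
    also have "... \<le> f (S j \<union> Op)"
      using assms(3) Op Bj unfolding monotone_on_sets_def by auto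
    also have "... \<le> f (S j) + (\<Sum>e\<in>Op. marg f e (S j))"
      using sum_marg[OF assms(3,4), of Op "S j"] Op Bj finite_subset[OF Op(1) assms(1)] by simp
    also have "(\<Sum>e\<in>Op. marg f e (S j)) \<le> real (card Op) * tau"
      using sum_bounded_above[of Op "\<lambda>e. marg f e (S j)" tau] mb Op(1) by auto
    also have "... \<le> real k * tau" using Op(2) tau0 by (simp add: mult_right_mono)
    also have "real k * tau = q^j * Q" unfolding tau_def using kpos by simp
    finally show ?thesis by (simp add: algebra_simps)
  qed
  have inv: "j \<le> p \<Longrightarrow> f (S j) \<ge> Q*(1-q^j) + q^j*Q*(real (card (S j))/real k - real j/real p)" for j
  proof (induction j)
    case 0 then show ?case using Sz assms(5) unfolding normalized_on_def by simp
  next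
    case (Suc j)
    define s where "s = real (card (S j))"
    define t where "t = s / real k - real j / real p"
    define tau where "tau = q^Suc j * Q / real k"
    define c where "c = Q*(1 - q^Suc j) - q^Suc j*Q*(real j+1)/real p"
    have Bj: "finite (S j)" "card (S j) \<le> k" "S j \<subseteq> V" using basic[of j] Suc.prems by auto
    have eq: "c + tau * s = Q*(1-q^j) + Q*(q^Suc j)*t"
      unfolding c_def tau_def t_def using key_alg[OF qid, of Q "q^j" "real j" "real k" s]
      by (simp add: algebra_simps)
    have IH: "f (S j) \<ge> Q*(1-q^j) + q^j*Q*t" using Suc s_def t_def by simp
    have start: "f (S j) \<ge> c + tau * s"
    proof (cases "t \<ge> 0")
      case True
      have "q^Suc j*Q*t \<le> q^j*Q*t"
        using True Q0 q0 by (simp add: mult_right_mono mult_left_le_one_le mult.assoc)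
      then show ?thesis using IH eq by (simp add: algebra_simps)
    next
      case False
      have j1: "1 \<le> j" using False Sz unfolding t_def s_def by (cases j) auto
      have "s / real k < real j / real p" using False t_def by simp
      also have "... \<le> 1" using Suc.prems by simp
      finally have "s < real k" using kpos by (simp add: divide_less_eq)
      then have "card (S j) < k" using s_def by simp
      then have "f (S j) \<ge> Q*(1-q^j)" using unfull[OF j1] Suc.prems by simp
      moreover have "Q*(q^Suc j)*t \<le> 0" using False Q0 q0
        by (simp add: mult_nonneg_nonpos)
      ultimately show ?thesis using eq by simp
    qed
    have "f (S (Suc j)) \<ge> c + tau * real (card (S (Suc j)))"
      using op_inv[OF Bj(1), of c tau f k "sigma (Suc j)"] start SS[of j] tau_def s_def by simp
    then show ?case unfolding c_def tau_def using kpos by (simp add: algebra_simps)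
  qed
  have Bp: "card (S p) \<le> k" using basic[of p] by simp
  have "f (S p) \<ge> Q*(1 - q^p)"
  proof (cases "card (S p) = k")
    case True
    then show ?thesis using inv[of p] kpos assms(8) by simp
  next
    case False
    then show ?thesis using unfull[of p] Bp assms(8) by simp
  qed
  then show ?thesis using Bp unfolding S_def Q_def q_def by (simp add: algebra_simps)
qed

end
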